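(* Let $\mathcal{T}=(V,A,E,f,q)$ be a decorated tree and let $\eta\in\mathrm{Cent}(\mathcal{T})$. There exists a unique decorated tree $\mathcal{T}^{(\eta)}$ satisfying: (i) $\mathcal{T}^{(\eta)}=(V,A,E,f,q^* )$ for some $q^*$; (ii) $q^*(e,\eta)=q(e,\eta)$ for all edges $e$ containing $\eta$; (iii) $q^*(e,v)=q(e,v)$ for all $v\in V\setminus\{\eta\}$ and all edges $e$ containing $v$ and not in $\gamma_{\eta,v}$; (iv) if $e=\{\eta,v\}$ is an edge with $v\in V$, then $q^*(e,v)=Q(e,v)-q(e,v)$; (v) if $e=\{u,v\}$ is an edge with $u,v\in V\setminus\{\eta\}$, then $\det^*(e)=-\det(e)$, where $\det(e)$ is computed in $\mathcal{T}$ and $\det^*(e)$ in $\mathcal{T}^{(\eta)}$. Moreover, $\mathcal{T}^{(\eta)}$ satisfies: (vi) if $v\in V\setminus\{\eta\}$ and $e$ is the unique edge in $\gamma_{\eta,v}$ containing $v$, then $Q(e,v)$ divides $q(e,v)+q^*(e,v)$.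
   Context: A graph is a pair $(X_0,X_1)$ of finite sets such that each element of $X_1$ (an edge) is a $2$-element subset of $X_0$; elements of $X_0$ are cells. A path is a tuple $(x_0,\dots,x_n)$ ($n\ge0$) of cells with $\{x_i,x_{i+1}\}$ an edge for each $i<n$, these edges pairwise distinct; a cell/edge is in the path if it is some $x_i$ / some $\{x_i,x_{i+1}\}$. The graph is a tree if any two cells $x,y$ are joined by a unique path $\gamma_{x,y}$. A decorated tree is $(V,A,E,f,q)$ with $V$ (vertices), $A$ (arrows) finite disjoint sets, $(V\cup A,E)$ a tree, every arrow contained in exactly one edge, $f:A\to\mathbb{Z}$, $q(e,x)\in\mathbb{Z}$ for each $e\in E$, $x\in e$, with $q(e,\alpha)=1$ for $\alpha\in A$, and for each $v\in V$ and distinct edges $e,e'\ni v$, $\gcd(q(e,v),q(e',v))=1$. For $x\in V\cup A$, $e\ni x$: $Q(e,x)=\prod q(e',x)$ over edges $e'\ne e$ containing $x$ (empty product $=1$); for an edge $e=\{x,y\}$, $\det(e)=q(e,x)q(e,y)-Q(e,x)Q(e,y)$. A path $(w_1,\dots,w_m)$ with $m\ge2$ satisfies $(+)$ if every edge $e\ni w_m$ other than $\{w_{m-1},w_m\}$ has $q(e,w_m)\ge1$ and at most one such edge has $q(e,w_m)>1$. An element $x\in V\cup A$ is central if $\gamma_{x,v}$ satisfies $(+)$ for every $v\in V\setminus\{x\}$; $\mathrm{Cent}(\mathcal{T})$ is the set of central elements. *)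

theory Defs
  imports Main
begin

definition is_graph :: "'a set \<Rightarrow> 'a set set \<Rightarrow> bool" where
  "is_graph X0 X1 \<longleftrightarrow> finite X0 \<and> finite X1 \<and> (\<forall>e\<in>X1. e \<subseteq> X0 \<and> card e = 2)"

definition path_edges :: "'a list \<Rightarrow> 'a set list" where
  "path_edges xs = map (\<lambda>i. {xs ! i, xs ! Suc i}) [0..<length xs - 1]"

definition is_path :: "'a set \<Rightarrow> 'a set set \<Rightarrow> 'a list \<Rightarrow> bool" where
  "is_path X0 X1 xs \<longleftrightarrow> xs \<noteq> [] \<and> set xs \<subseteq> X0 \<and> set (path_edges xs) \<subseteq> X1
     \<and> distinct (path_edges xs)"

definition is_tree :: "'a set \<Rightarrow> 'a set set \<Rightarrow> bool" where
  "is_tree X0 X1 \<longleftrightarrow> is_graph X0 X1 \<and>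
     (\<forall>x\<in>X0. \<forall>y\<in>X0. \<exists>!xs. is_path X0 X1 xs \<and> hd xs = x \<and> last xs = y)"

definition gamma :: "'a set \<Rightarrow> 'a set set \<Rightarrow> 'a \<Rightarrow> 'a \<Rightarrow> 'a list" where
  "gamma X0 X1 x y = (THE xs. is_path X0 X1 xs \<and> hd xs = x \<and> last xs = y)"

(* Decorated tree (V, A, E, f, q); q e x is only meaningful for e \<in> E, x \<in> e. *)
definition decorated_tree ::
  "'a set \<Rightarrow> 'a set \<Rightarrow> 'a set set \<Rightarrow> ('a \<Rightarrow> int) \<Rightarrow> ('a set \<Rightarrow> 'a \<Rightarrow> int) \<Rightarrow> bool" where
  "decorated_tree V A E f q \<longleftrightarrow>
     finite V \<and> finite A \<and> V \<inter> A = {} \<and> is_tree (V \<union> A) E \<and>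
     (\<forall>\<alpha>\<in>A. \<exists>!e. e \<in> E \<and> \<alpha> \<in> e) \<and>
     (\<forall>e\<in>E. \<forall>\<alpha>\<in>A. \<alpha> \<in> e \<longrightarrow> q e \<alpha> = 1) \<and>
     (\<forall>v\<in>V. \<forall>e\<in>E. \<forall>e'\<in>E. v \<in> e \<and> v \<in> e' \<and> e \<noteq> e' \<longrightarrow> gcd (q e v) (q e' v) = 1)"

definition Qf :: "'a set set \<Rightarrow> ('a set \<Rightarrow> 'a \<Rightarrow> int) \<Rightarrow> 'a set \<Rightarrow> 'a \<Rightarrow> int" where
  "Qf E q e x = (\<Prod>e'\<in>{e'\<in>E. x \<in> e' \<and> e' \<noteq> e}. q e' x)"

definition detf :: "'a set set \<Rightarrow> ('a set \<Rightarrow> 'a \<Rightarrow> int) \<Rightarrow> 'a \<Rightarrow> 'a \<Rightarrow> int" where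
  "detf E q x y = q {x,y} x * q {x,y} y - Qf E q {x,y} x * Qf E q {x,y} y"

definition plus_cond :: "'a set set \<Rightarrow> ('a set \<Rightarrow> 'a \<Rightarrow> int) \<Rightarrow> 'a list \<Rightarrow> bool" where
  "plus_cond E q ws \<longleftrightarrow> length ws \<ge> 2 \<and>
     (let wm = last ws; wm1 = ws ! (length ws - 2);
          others = {e\<in>E. wm \<in> e \<and> e \<noteq> {wm1, wm}} in
      (\<forall>e\<in>others. q e wm \<ge> 1) \<and> card {e\<in>others. q e wm > 1} \<le> 1)"

definition Cent :: "'a set \<Rightarrow> 'a set \<Rightarrow> 'a set set \<Rightarrow> ('a set \<Rightarrow> 'a \<Rightarrow> int) \<Rightarrow> 'a set" where
  "Cent V A E q = {x \<in> V \<union> A. \<forall>v\<in>V - {x}. plus_cond E q (gamma (V \<union> A) E x v)}"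

definition is_eta_transform ::
  "'a set \<Rightarrow> 'a set \<Rightarrow> 'a set set \<Rightarrow> ('a \<Rightarrow> int) \<Rightarrow> ('a set \<Rightarrow> 'a \<Rightarrow> int) \<Rightarrow> 'a
   \<Rightarrow> ('a set \<Rightarrow> 'a \<Rightarrow> int) \<Rightarrow> bool" where
  "is_eta_transform V A E f q \<eta> qs \<longleftrightarrow>
     decorated_tree V A E f qs \<and>
     (\<forall>e\<in>E. \<eta> \<in> e \<longrightarrow> qs e \<eta> = q e \<eta>) \<and>
     (\<forall>v\<in>V - {\<eta>}. \<forall>e\<in>E. v \<in> e \<and> e \<notin> set (path_edges (gamma (V \<union> A) E \<eta> v))
         \<longrightarrow> qs e v = q e v) \<and>
     (\<forall>v\<in>V. {\<eta>, v} \<in> E \<longrightarrow> qs {\<eta>, v} v = Qf E q {\<eta>, v} v - q {\<eta>, v} v) \<and>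
     (\<forall>u\<in>V - {\<eta>}. \<forall>v\<in>V - {\<eta>}. {u, v} \<in> E \<longrightarrow> detf E qs u v = - detf E q u v)"

end

theory Submission
  imports Defs
begin


lemma pe_len[simp]: "length (path_edges xs) = length xs - 1"
  by (simp add: path_edges_def)

lemma pe_nth: "k < length xs - 1 \<Longrightarrow> path_edges xs ! k = {xs ! k, xs ! Suc k}"
  by (simp add: path_edges_def)

lemma pe_set: "e \<in> set (path_edges xs) \<longleftrightarrow> (\<exists>k. Suc k < length xs \<and> e = {xs ! k, xs ! Suc k})"
  unfolding path_edges_def by (auto simp: less_diff_conv)

lemma pe_sub: "e \<in> set (path_edges xs) \<Longrightarrow> e \<subseteq> set xs"
  by (auto simp: pe_set)

lemma pe_take: "i < length xs \<Longrightarrow> path_edges (take (Suc i) xs) = take i (path_edges xs)"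
  by (rule nth_equalityI) (auto simp: pe_nth)

lemma pe_snoc: assumes "xs \<noteq> []" shows "path_edges (xs @ [v]) = path_edges xs @ [{last xs, v}]"
proof (rule nth_equalityI)
  show "length (path_edges (xs @ [v])) = length (path_edges xs @ [{last xs, v}])"
    using assms by simp
  fix i assume "i < length (path_edges (xs @ [v]))"
  then have i: "i < length xs" by simp
  show "path_edges (xs @ [v]) ! i = (path_edges xs @ [{last xs, v}]) ! i"
  proof (cases "i < length xs - 1")
    case True
    then have "Suc i < length xs" by simp
    then show ?thesis using True i by (simp add: pe_nth nth_append)
  next
    case False
    then have "i = length xs - 1" using i by simp
    then show ?thesis using assms by (simp add: pe_nth nth_append last_conv_nth)
  qed
qed

definition Rf :: "'a set set \<Rightarrow> ('a set \<Rightarrow> 'a \<Rightarrow> int) \<Rightarrow> 'a set \<Rightarrow> 'a set \<Rightarrow> 'a \<Rightarrow> int" where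
  "Rf E q e e' u = (\<Prod>e''\<in>{e''\<in>E. u \<in> e'' \<and> e'' \<noteq> e \<and> e'' \<noteq> e'}. q e'' u)"

fun sv :: "'a set set \<Rightarrow> ('a set \<Rightarrow> 'a \<Rightarrow> int) \<Rightarrow> 'a list \<Rightarrow> int" where
  "sv E q (v # u # []) = Qf E q {u,v} v"
| "sv E q (v # u # w # rest) = Qf E q {u,v} v * (sv E q (u # w # rest) * Rf E q {u,v} {w,u} u div q {u,v} u)"
| "sv E q _ = 0"

lemma sv_dvd: "\<exists>k. sv E q (v # u # rest) = Qf E q {u,v} v * k"
  by (cases rest) auto

lemma Qsplit: "finite E \<Longrightarrow> e' \<in> E \<Longrightarrow> u \<in> e' \<Longrightarrow> e' \<noteq> e \<Longrightarrow> Qf E h e u = h e' u * Rf E h e e' u"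
proof -
  assume a: "finite E" "e' \<in> E" "u \<in> e'" "e' \<noteq> e"
  have s: "{e''\<in>E. u \<in> e'' \<and> e'' \<noteq> e} = insert e' {e''\<in>E. u \<in> e'' \<and> e'' \<noteq> e \<and> e'' \<noteq> e'}"
    using a by blast
  have fin: "finite {e''\<in>E. u \<in> e'' \<and> e'' \<noteq> e \<and> e'' \<noteq> e'}" using a by simp
  have ni: "e' \<notin> {e''\<in>E. u \<in> e'' \<and> e'' \<noteq> e \<and> e'' \<noteq> e'}" by blast
  show ?thesis unfolding Qf_def Rf_def s by (rule prod.insert[OF fin ni])
qed

lemma gcd_lem: fixes a c Q k :: int
  assumes "gcd a c = 1" "c dvd Q" shows "gcd (Q * k - a) c = 1"
proof -
  obtain m where "Q = c * m" using assms by auto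
  then have e: "Q * k - a = (m*k) * c + (- a)" by simp
  have "gcd (Q * k - a) c = gcd c (Q * k - a)" by (rule gcd.commute)
  also have "\<dots> = gcd c ((m*k) * c + (-a))" by (simp only: e)
  also have "\<dots> = gcd c (-a)" by (rule gcd_add_mult)
  finally show ?thesis using assms by (simp add: gcd.commute)
qed



locale dtc =
  fixes V A :: "'a set" and E :: "'a set set" and f :: "'a \<Rightarrow> int"
    and q :: "'a set \<Rightarrow> 'a \<Rightarrow> int" and \<eta> :: 'a
  assumes dt: "decorated_tree V A E f q" and cent: "\<eta> \<in> Cent V A E q"
begin

abbreviation g where "g v \<equiv> gamma (V \<union> A) E \<eta> v"

lemma tree: "is_tree (V \<union> A) E" using dt by (simp add: decorated_tree_def)
lemma finE: "finite E" using tree by (simp add: is_tree_def is_graph_def)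
lemma edge_sub: "e \<in> E \<Longrightarrow> e \<subseteq> V \<union> A" using tree by (simp add: is_tree_def is_graph_def)
lemma edge_card: "e \<in> E \<Longrightarrow> card e = 2" using tree by (simp add: is_tree_def is_graph_def)
lemma eta_X: "\<eta> \<in> V \<union> A" using cent by (simp add: Cent_def)

lemma g_path: assumes "v \<in> V \<union> A"
  shows "is_path (V \<union> A) E (g v) \<and> hd (g v) = \<eta> \<and> last (g v) = v"
proof -
  have "\<exists>!xs. is_path (V \<union> A) E xs \<and> hd xs = \<eta> \<and> last xs = v"
    using tree assms eta_X by (simp add: is_tree_def)
  then show ?thesis unfolding gamma_def by (rule theI')
qed

lemma g_uniq: assumes "is_path (V \<union> A) E xs" "hd xs = \<eta>" "last xs = v"
  shows "g v = xs"
proof -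
  have "xs \<noteq> []" "set xs \<subseteq> V \<union> A" using assms by (auto simp: is_path_def)
  then have "v \<in> V \<union> A" using assms(3) last_in_set by blast
  then have "\<exists>!xs. is_path (V \<union> A) E xs \<and> hd xs = \<eta> \<and> last xs = v"
    using tree eta_X by (simp add: is_tree_def)
  then show ?thesis unfolding gamma_def by (rule the1_equality) (simp add: assms)
qed

lemma g_ne: "v \<in> V \<union> A \<Longrightarrow> g v \<noteq> []"
  using g_path by (simp add: is_path_def)

lemma g_take: assumes "v \<in> V \<union> A" "i < length (g v)"
  shows "g (g v ! i) = take (Suc i) (g v)"
proof (rule g_uniq)
  let ?xs = "g v"
  have p: "is_path (V \<union> A) E ?xs" "hd ?xs = \<eta>" using g_path assms by auto
  have pe: "path_edges (take (Suc i) ?xs) = take i (path_edges ?xs)" using pe_take assms by simp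
  show "is_path (V \<union> A) E (take (Suc i) ?xs)"
    using p unfolding is_path_def pe
    by (auto dest: in_set_takeD)
  show "hd (take (Suc i) ?xs) = \<eta>" using p assms by (simp add: hd_conv_nth)
  show "last (take (Suc i) ?xs) = ?xs ! i" using assms by (simp add: take_Suc_conv_app_nth)
qed

lemma g_distinct: assumes "v \<in> V \<union> A" shows "distinct (g v)"
proof -
  have "g v ! i \<noteq> g v ! j" if "i < length (g v)" "j < length (g v)" "i \<noteq> j" for i j
  proof
    assume "g v ! i = g v ! j"
    then have "take (Suc i) (g v) = take (Suc j) (g v)" using g_take assms that by metis
    then have "length (take (Suc i) (g v)) = length (take (Suc j) (g v))" by simp
    then show False using that by simp
  qed
  then show ?thesis by (simp add: distinct_conv_nth)
qed

lemma g_eta: "g \<eta> = [\<eta>]"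
  by (rule g_uniq) (use eta_X in \<open>auto simp: is_path_def path_edges_def\<close>)

lemma g_len: assumes "v \<in> V \<union> A" "v \<noteq> \<eta>" shows "length (g v) \<ge> 2"
proof -
  have "g v \<noteq> []" using g_ne assms by simp
  moreover have "length (g v) \<noteq> 1"
  proof
    assume "length (g v) = 1"
    then obtain x where "g v = [x]" by (metis One_nat_def length_0_conv length_Suc_conv)
    then show False using g_path[OF assms(1)] assms by force
  qed
  ultimately show ?thesis by (metis length_greater_0_conv One_nat_def Suc_1 Suc_leI le_neq_implies_less less_Suc_eq_le)
qed

definition par where "par v = g v ! (length (g v) - 2)"

lemma g_par: assumes "v \<in> V \<union> A" "v \<noteq> \<eta>"
  shows "g v = g (par v) @ [v]" "par v \<in> V \<union> A"
proof -
  have l: "length (g v) \<ge> 2" using g_len assms by simp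
  have "g (par v) = take (length (g v) - 1) (g v)"
    unfolding par_def using g_take[OF assms(1), of "length (g v) - 2"] l
    by (simp add: Suc_diff_Suc numeral_2_eq_2)
  also have "\<dots> = butlast (g v)" by (simp add: butlast_conv_take)
  finally have "g (par v) = butlast (g v)" .
  then show "g v = g (par v) @ [v]" using g_path[OF assms(1)] g_ne[OF assms(1)]
    by (metis append_butlast_last_id)
  have "par v \<in> set (g v)" unfolding par_def using l by simp
  then show "par v \<in> V \<union> A" using g_path[OF assms(1)] by (auto simp: is_path_def)
qed

lemma par_props: assumes "v \<in> V \<union> A" "v \<noteq> \<eta>"
  shows "path_edges (g v) = path_edges (g (par v)) @ [{par v, v}]"
    "last (path_edges (g v)) = {par v, v}" "{par v, v} \<in> E"
    "v \<notin> set (g (par v))" "par v \<noteq> v" "par v \<in> set (g (par v))"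
proof -
  have pv: "par v \<in> V \<union> A" using g_par assms by simp
  have ne: "g (par v) \<noteq> []" using g_ne pv by simp
  have lp: "last (g (par v)) = par v" using g_path pv by simp
  show pe: "path_edges (g v) = path_edges (g (par v)) @ [{par v, v}]"
    using g_par(1)[OF assms] pe_snoc[OF ne, of v] lp by simp
  then show "last (path_edges (g v)) = {par v, v}" by simp
  have "set (path_edges (g v)) \<subseteq> E" using g_path[OF assms(1)] by (simp add: is_path_def)
  then show "{par v, v} \<in> E" using pe by simp
  have "distinct (g v)" using g_distinct assms by simp
  then have "distinct (g (par v) @ [v])" using g_par(1)[OF assms] by metis
  then show nin: "v \<notin> set (g (par v))" by simp
  show "par v \<in> set (g (par v))" using lp ne by (metis last_in_set)
  then show "par v \<noteq> v" using nin by auto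
qed

lemma g_snoc: assumes "u \<in> V \<union> A" "{u,v} \<in> E" "v \<notin> set (g u)"
  shows "g v = g u @ [v]"
proof (rule g_uniq)
  have ne: "g u \<noteq> []" using g_ne assms by simp
  have p: "is_path (V \<union> A) E (g u)" "hd (g u) = \<eta>" "last (g u) = u" using g_path assms by auto
  have vX: "v \<in> V \<union> A" using edge_sub assms by auto
  have pe: "path_edges (g u @ [v]) = path_edges (g u) @ [{u, v}]" using pe_snoc[OF ne] p by simp
  have "{u,v} \<notin> set (path_edges (g u))" using pe_sub assms(3) by blast
  then show "is_path (V \<union> A) E (g u @ [v])" using p vX assms(2) unfolding is_path_def pe by auto
  show "hd (g u @ [v]) = \<eta>" using p ne by simp
  show "last (g u @ [v]) = v" by simp
qed

lemma in_g_take: assumes "u \<in> V \<union> A" "v \<in> set (g u)"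
  shows "length (g v) \<le> length (g u) \<and> (length (g v) = length (g u) \<longrightarrow> v = u)"
proof -
  obtain i where i: "i < length (g u)" "v = g u ! i" using assms by (metis in_set_conv_nth)
  then have t: "g v = take (Suc i) (g u)" using g_take assms by simp
  have le: "length (g v) \<le> length (g u)" using t by simp
  have "length (g v) = length (g u) \<Longrightarrow> v = u"
  proof -
    assume "length (g v) = length (g u)"
    then have "g v = g u" using t by simp
 have "v \<in> V \<union> A" using g_path[OF assms(1)] assms(2) by (auto simp: is_path_def)
    then have l1: "last (g v) = v" using g_path by blast
    have l2: "last (g u) = u" using g_path assms(1) by blast
    show "v = u" using l1 l2 \<open>g v = g u\<close> by metis
  qed
  then show ?thesis using le by blast
qed

end


lemma detf_sym: "detf E h u v = detf E h v u"
  unfolding detf_def by (simp add: insert_commute)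

context dtc begin

lemma edge_cases: assumes "{u,v} \<in> E" shows "g v = g u @ [v] \<or> g u = g v @ [u]"
proof -
  have uX: "u \<in> V \<union> A" and vX: "v \<in> V \<union> A" using edge_sub assms by auto
  have uv: "u \<noteq> v" using edge_card[OF assms] by auto
  have vu: "{v,u} \<in> E" using assms by (simp add: insert_commute)
  show ?thesis
  proof (cases "v \<in> set (g u)")
    case False then show ?thesis using g_snoc[OF uX assms] by simp
  next
    case True
    show ?thesis
    proof (cases "u \<in> set (g v)")
      case False then show ?thesis using g_snoc[OF vX vu] by simp
    next
      case T2: True
      have "length (g v) \<le> length (g u)" "length (g v) = length (g u) \<longrightarrow> v = u"
        using in_g_take[OF uX True] by auto
      moreover have "length (g u) \<le> length (g v)" using in_g_take[OF vX T2] by auto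
      ultimately show ?thesis using uv by simp
    qed
  qed
qed

lemma on_path: assumes "x \<in> V \<union> A" "x \<noteq> \<eta>" "e \<in> set (path_edges (g x))" "x \<in> e"
  shows "e = {par x, x}"
proof (rule ccontr)
  assume "e \<noteq> {par x, x}"
  then have "e \<in> set (path_edges (g (par x)))" using assms(3) par_props(1)[OF assms(1,2)] by simp
  then have "x \<in> set (g (par x))" using pe_sub assms(4) by blast
  then show False using par_props(4)[OF assms(1,2)] by simp
qed

lemma par_ne_edge: assumes "x \<in> V \<union> A" "x \<noteq> \<eta>" "par x \<noteq> \<eta>"
  shows "{par (par x), par x} \<noteq> {par x, x}" "{par (par x), par x} \<in> E"
proof -
  let ?p = "par x"
  have pX: "?p \<in> V \<union> A" using g_par assms by simp
  have "par ?p \<in> set (g ?p)" using g_par(1)[OF pX assms(3)] par_props(6)[OF pX assms(3)] by simp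
  moreover have "x \<notin> set (g ?p)" using par_props(4)[OF assms(1,2)] .
  moreover have "par ?p \<noteq> ?p" using par_props(5)[OF pX assms(3)] .
  ultimately show "{par ?p, ?p} \<noteq> {?p, x}" by (metis doubleton_eq_iff)
  show "{par (par x), par x} \<in> E" using par_props(3)[OF pX assms(3)] .
qed

lemma par_V: assumes "x \<in> V \<union> A" "x \<noteq> \<eta>" "par x \<noteq> \<eta>" shows "par x \<in> V"
proof (rule ccontr)
  assume nv: "par x \<notin> V"
  have pX: "par x \<in> V \<union> A" using g_par assms by simp
  then have pA: "par x \<in> A" using nv by simp
  have "\<exists>!e. e \<in> E \<and> par x \<in> e" using dt pA by (simp add: decorated_tree_def)
  moreover have "{par (par x), par x} \<in> E" "{par x, x} \<in> E"
    using par_ne_edge[OF assms] par_props(3)[OF assms(1,2)] by auto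
  ultimately show False using par_ne_edge(1)[OF assms] by blast
qed

lemma plus: assumes "u \<in> V" "u \<noteq> \<eta>" "e \<in> E" "u \<in> e" "e \<noteq> {par u, u}"
  shows "q e u \<ge> 1 \<and> (q e u > 1 \<longrightarrow> (\<forall>e'\<in>E. u \<in> e' \<longrightarrow> e' \<noteq> {par u, u} \<longrightarrow> e' \<noteq> e \<longrightarrow> q e' u = 1))"
proof -
  have uX: "u \<in> V \<union> A" using assms by simp
  have pc: "plus_cond E q (g u)" using cent assms by (simp add: Cent_def)
  have lu: "last (g u) = u" using g_path uX by simp
  let ?O = "{e\<in>E. u \<in> e \<and> e \<noteq> {par u, u}}"
  have c1: "\<forall>e\<in>?O. q e u \<ge> 1" and c2: "card {e\<in>?O. q e u > 1} \<le> 1"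
    using pc unfolding plus_cond_def Let_def lu par_def[symmetric] by auto
  have fin: "finite {e\<in>?O. q e u > 1}" using finE by simp
  have "q e' u = 1" if "q e u > 1" "e' \<in> E" "u \<in> e'" "e' \<noteq> {par u, u}" "e' \<noteq> e" for e'
  proof (rule ccontr)
    assume "q e' u \<noteq> 1"
    moreover have "q e' u \<ge> 1" using c1 that by simp
    ultimately have "q e' u > 1" by simp
    then have "{e, e'} \<subseteq> {e\<in>?O. q e u > 1}" using that assms by auto
    then have "card {e, e'} \<le> card {e\<in>?O. q e u > 1}" using fin card_mono by blast
    then show False using c2 that by simp
  qed
  then show ?thesis using c1 assms by auto
qed

definition qs where
  "qs e x = (if x \<in> V - {\<eta>} \<and> e = {par x, x} then sv E q (rev (g x)) - q e x else q e x)"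

lemma qs_eq: assumes "\<not> (x \<in> V - {\<eta>} \<and> e = {par x, x})" shows "qs e x = q e x"
  unfolding qs_def using assms by (rule if_not_P)

lemma qs_par: "x \<in> V - {\<eta>} \<Longrightarrow> qs {par x, x} x = sv E q (rev (g x)) - q {par x, x} x"
  unfolding qs_def by simp

lemma rev_g: assumes "x \<in> V \<union> A" "x \<noteq> \<eta>"
  shows "rev (g x) = x # par x # rev (butlast (g (par x)))"
proof -
  have pX: "par x \<in> V \<union> A" using g_par assms by simp
  have "g (par x) = butlast (g (par x)) @ [par x]"
    using g_ne[OF pX] g_path[OF pX] by (metis append_butlast_last_id)
  then show ?thesis using g_par(1)[OF assms] by (metis rev.simps(2) rev_append rev_singleton_conv append_Cons append_Nil)
qed

lemma sv_base: assumes "x \<in> V \<union> A" "x \<noteq> \<eta>" "par x = \<eta>"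
  shows "sv E q (rev (g x)) = Qf E q {\<eta>, x} x"
  using rev_g[OF assms(1,2)] assms(3) g_eta by simp

lemma sv_step: assumes "x \<in> V \<union> A" "x \<noteq> \<eta>" "par x \<noteq> \<eta>"
  shows "sv E q (rev (g x)) = Qf E q {par x, x} x * (sv E q (rev (g (par x)))
     * Rf E q {par x, x} {par (par x), par x} (par x) div q {par x, x} (par x))"
proof -
  have pX: "par x \<in> V \<union> A" using g_par assms by simp
  have rb: "\<And>xs. rev (butlast xs) = tl (rev xs)" by (metis butlast_rev rev_rev_ident)
  have r1: "rev (g x) = x # par x # tl (rev (g (par x)))" using rev_g[OF assms(1,2)] rb by simp
  have r2: "rev (g (par x)) = par x # par (par x) # tl (rev (g (par (par x))))"
    using rev_g[OF pX assms(3)] rb by simp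
  show ?thesis unfolding r1 unfolding r2 by simp
qed

lemma sv_dvd': assumes "x \<in> V \<union> A" "x \<noteq> \<eta>"
  shows "\<exists>k. sv E q (rev (g x)) = Qf E q {par x, x} x * k"
  using rev_g[OF assms] sv_dvd by metis

lemma qs_iii: assumes "v \<in> V - {\<eta>}" "e \<in> E" "v \<in> e" "e \<notin> set (path_edges (g v))"
  shows "qs e v = q e v"
proof -
  have "{par v, v} \<in> set (path_edges (g v))" using par_props(1)[of v] assms by simp
  then have "e \<noteq> {par v, v}" using assms by auto
  then show ?thesis using qs_eq by blast
qed

lemma qs_iv: assumes "v \<in> V" "{\<eta>, v} \<in> E"
  shows "qs {\<eta>, v} v = Qf E q {\<eta>, v} v - q {\<eta>, v} v" "par v = \<eta>" "v \<noteq> \<eta>"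
proof -
  show vne: "v \<noteq> \<eta>" using edge_card[OF assms(2)] by auto
  have "g v = g \<eta> @ [v]" using g_snoc[OF eta_X assms(2)] g_eta vne by simp
  then have "g v = [\<eta>, v]" using g_eta by simp
  then show pv: "par v = \<eta>" unfolding par_def by simp
  show "qs {\<eta>, v} v = Qf E q {\<eta>, v} v - q {\<eta>, v} v"
    using qs_par[of v] sv_base[of v] assms vne pv by simp
qed

end


context dtc begin

lemma det_core: assumes v: "v \<in> V - {\<eta>}" and pn: "par v \<noteq> \<eta>"
  shows "detf E qs (par v) v = - detf E q (par v) v"
proof -
  have vX: "v \<in> V \<union> A" and vne: "v \<noteq> \<eta>" using v by auto
  define p where "p = par v"
  define w where "w = par p"
  define e where "e = {p, v}"
  define eu where "eu = {w, p}"
  have pX: "p \<in> V \<union> A" using g_par vX vne p_def by simp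
  have pV: "p \<in> V" using par_V vX vne pn p_def by simp
  have pne: "p \<noteq> \<eta>" using pn p_def by simp
  have eE: "e \<in> E" using par_props(3)[OF vX vne] e_def p_def by simp
  have euE: "eu \<in> E" and ne: "eu \<noteq> e" using par_ne_edge[OF vX vne pn] eu_def w_def e_def p_def by auto
  have pe: "p \<in> e" "v \<in> e" "p \<in> eu" using e_def eu_def by auto
  have h1: "qs e p = q e p" using qs_eq ne eu_def w_def by metis
  have h2: "qs e v = sv E q (rev (g v)) - q e v" using qs_par v e_def p_def by simp
  have h3: "Qf E qs e v = Qf E q e v"
    unfolding Qf_def by (rule prod.cong) (auto intro!: qs_eq simp: e_def p_def)
  have h4: "Qf E qs e p = qs eu p * Rf E qs e eu p" using Qsplit[OF finE euE pe(3) ne] .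
  have h5: "Rf E qs e eu p = Rf E q e eu p"
    unfolding Rf_def by (rule prod.cong) (auto intro!: qs_eq simp: eu_def w_def)
  have h6: "Qf E q e p = q eu p * Rf E q e eu p" using Qsplit[OF finE euE pe(3) ne] .
  have h7: "qs eu p = sv E q (rev (g p)) - q eu p" using qs_par pV pne eu_def w_def by simp
  have h8: "sv E q (rev (g v)) = Qf E q e v * (sv E q (rev (g p)) * Rf E q e eu p div q e p)"
    using sv_step[OF vX vne pn] e_def eu_def w_def p_def by simp
  have pl: "q e p \<ge> 1 \<and> (q e p > 1 \<longrightarrow> (\<forall>e'\<in>E. p \<in> e' \<longrightarrow> e' \<noteq> {par p, p} \<longrightarrow> e' \<noteq> e \<longrightarrow> q e' p = 1))"
    using plus[OF pV pne eE pe(1)] ne eu_def w_def by auto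
  have dv: "q e p dvd sv E q (rev (g p)) * Rf E q e eu p"
  proof (cases "q e p > 1")
    case False then have "q e p = 1" using pl by simp
    then show ?thesis by simp
  next
    case True
    then have all1: "\<forall>e'\<in>E. p \<in> e' \<longrightarrow> e' \<noteq> eu \<longrightarrow> e' \<noteq> e \<longrightarrow> q e' p = 1"
      using pl eu_def w_def by simp
    have R1: "Rf E q e eu p = 1" unfolding Rf_def by (rule prod.neutral) (use all1 in auto)
    have R2: "Rf E q eu e p = 1" unfolding Rf_def by (rule prod.neutral) (use all1 in auto)
    have "Qf E q eu p = q e p * Rf E q eu e p" using Qsplit[OF finE eE pe(1)] ne by metis
    then have "Qf E q eu p = q e p" using R2 by simp
    moreover obtain k where "sv E q (rev (g p)) = Qf E q {par p, p} p * k" using sv_dvd'[OF pX pne] by blast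
    ultimately have "sv E q (rev (g p)) = q e p * k" using eu_def w_def by simp
    then show ?thesis using R1 by simp
  qed
  define D where "D = sv E q (rev (g p)) * Rf E q e eu p div q e p"
  have h9: "q e p * D = sv E q (rev (g p)) * Rf E q e eu p" using dv D_def by simp
  have "detf E qs p v = qs e p * qs e v - Qf E qs e p * Qf E qs e v"
    unfolding detf_def e_def by simp
  also have "\<dots> = q e p * (Qf E q e v * D - q e v)
      - ((sv E q (rev (g p)) - q eu p) * Rf E q e eu p) * Qf E q e v"
    using h1 h2 h3 h4 h5 h7 h8 D_def by simp
  also have "\<dots> = - (q e p * q e v - (q eu p * Rf E q e eu p) * Qf E q e v)"
    using h9 by algebra
  also have "\<dots> = - detf E q p v" using h6 unfolding e_def detf_def by simp
  finally show ?thesis using p_def by simp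
qed

lemma gcd_case: assumes "v \<in> V - {\<eta>}" "e' \<in> E" "v \<in> e'" "e' \<noteq> {par v, v}"
  shows "gcd (qs {par v, v} v) (qs e' v) = 1"
proof -
  have vX: "v \<in> V \<union> A" and vne: "v \<noteq> \<eta>" using assms by auto
  have eE: "{par v, v} \<in> E" using par_props(3)[OF vX vne] .
  obtain k where k: "sv E q (rev (g v)) = Qf E q {par v, v} v * k" using sv_dvd'[OF vX vne] by blast
  have a: "qs {par v, v} v = Qf E q {par v, v} v * k - q {par v, v} v" using qs_par assms(1) k by simp
  have b: "qs e' v = q e' v" using qs_eq assms(4) by blast
  have c: "gcd (q {par v, v} v) (q e' v) = 1" using dt assms eE unfolding decorated_tree_def by auto
  have d: "q e' v dvd Qf E q {par v, v} v" unfolding Qf_def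
    by (rule dvd_prod_eqI[of _ e']) (use finE assms in auto)
  show ?thesis unfolding a b by (rule gcd_lem[OF c d])
qed

lemma exist: "is_eta_transform V A E f q \<eta> qs"
proof -
  have dtq: "decorated_tree V A E f qs"
  proof -
    have base: "finite V \<and> finite A \<and> V \<inter> A = {} \<and> is_tree (V \<union> A) E \<and> (\<forall>\<alpha>\<in>A. \<exists>!e. e \<in> E \<and> \<alpha> \<in> e)"
      using dt by (simp add: decorated_tree_def)
    have arr: "\<forall>e\<in>E. \<forall>\<alpha>\<in>A. \<alpha> \<in> e \<longrightarrow> qs e \<alpha> = 1"
    proof (intro ballI impI)
      fix e \<alpha> assume "e \<in> E" "\<alpha> \<in> A" "\<alpha> \<in> e"
      moreover have "\<alpha> \<notin> V" using base \<open>\<alpha> \<in> A\<close> by auto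
      ultimately show "qs e \<alpha> = 1" using qs_eq[of \<alpha> e] dt by (simp add: decorated_tree_def)
    qed
    have gc: "\<forall>v\<in>V. \<forall>e\<in>E. \<forall>e'\<in>E. v \<in> e \<and> v \<in> e' \<and> e \<noteq> e' \<longrightarrow> gcd (qs e v) (qs e' v) = 1"
    proof (intro ballI impI)
      fix v e e' assume H: "v \<in> V" "e \<in> E" "e' \<in> E" "v \<in> e \<and> v \<in> e' \<and> e \<noteq> e'"
      show "gcd (qs e v) (qs e' v) = 1"
      proof (cases "v \<in> V - {\<eta>} \<and> (e = {par v, v} \<or> e' = {par v, v})")
        case True
        then show ?thesis
        proof (cases "e = {par v, v}")
          case True
          then show ?thesis using gcd_case[of v e'] H \<open>v \<in> V - {\<eta>} \<and> _\<close> by auto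
        next
          case False
          then have "e' = {par v, v}" using \<open>v \<in> V - {\<eta>} \<and> _\<close> by simp
          then show ?thesis using gcd_case[of v e] H \<open>v \<in> V - {\<eta>} \<and> _\<close> False
            by (simp add: gcd.commute)
        qed
      next
        case False
        then have "qs e v = q e v" "qs e' v = q e' v" using qs_eq by blast+
        then show ?thesis using dt H by (simp add: decorated_tree_def)
      qed
    qed
    show ?thesis unfolding decorated_tree_def using base arr gc by blast
  qed
  have ii: "\<forall>e\<in>E. \<eta> \<in> e \<longrightarrow> qs e \<eta> = q e \<eta>" using qs_eq by blast
  have iii: "\<forall>v\<in>V - {\<eta>}. \<forall>e\<in>E. v \<in> e \<and> e \<notin> set (path_edges (g v)) \<longrightarrow> qs e v = q e v"
    using qs_iii by blast
  have iv: "\<forall>v\<in>V. {\<eta>, v} \<in> E \<longrightarrow> qs {\<eta>, v} v = Qf E q {\<eta>, v} v - q {\<eta>, v} v"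
    using qs_iv(1) by blast
  have v: "\<forall>u\<in>V - {\<eta>}. \<forall>v\<in>V - {\<eta>}. {u, v} \<in> E \<longrightarrow> detf E qs u v = - detf E q u v"
  proof (intro ballI impI)
    fix u v assume u: "u \<in> V - {\<eta>}" and v: "v \<in> V - {\<eta>}" and uv: "{u, v} \<in> E"
    have uX: "u \<in> V \<union> A" "u \<noteq> \<eta>" and vX: "v \<in> V \<union> A" "v \<noteq> \<eta>" using u v by auto
    have parof: "par x = y" if "x \<in> V \<union> A" "x \<noteq> \<eta>" "y \<in> V \<union> A" "g x = g y @ [x]" for x y
    proof -
      have "g (par x) = g y" using g_par(1)[OF that(1,2)] that(4) by simp
      then show ?thesis using g_path g_par(2)[OF that(1,2)] that(3) by metis
    qed
    from edge_cases[OF uv] show "detf E qs u v = - detf E q u v"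
    proof
      assume "g v = g u @ [v]"
      then have "par v = u" using parof vX uX by simp
      then show ?thesis using det_core[OF v] uX by simp
    next
      assume "g u = g v @ [u]"
      then have "par u = v" using parof vX uX by simp
      then show ?thesis using det_core[OF u] vX detf_sym by metis
    qed
  qed
  show ?thesis unfolding is_eta_transform_def using dtq ii iii iv v by blast
qed

lemma vi: "\<forall>v\<in>V - {\<eta>}. Qf E q (last (path_edges (g v))) v
                 dvd q (last (path_edges (g v))) v + qs (last (path_edges (g v))) v"
proof
  fix v assume v: "v \<in> V - {\<eta>}"
  have vX: "v \<in> V \<union> A" and vne: "v \<noteq> \<eta>" using v by auto
  obtain k where k: "sv E q (rev (g v)) = Qf E q {par v, v} v * k" using sv_dvd'[OF vX vne] by blast
  show "Qf E q (last (path_edges (g v))) v dvd q (last (path_edges (g v))) v + qs (last (path_edges (g v))) v"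
    unfolding par_props(2)[OF vX vne] using qs_par[OF v] k by simp
qed

lemma uniq: assumes T: "is_eta_transform V A E f q \<eta> qs'"
  shows "\<forall>e\<in>E. \<forall>x\<in>e. qs' e x = qs e x"
proof -
  have dt': "decorated_tree V A E f qs'"
    and ii': "\<forall>e\<in>E. \<eta> \<in> e \<longrightarrow> qs' e \<eta> = q e \<eta>"
    and iii': "\<forall>v\<in>V - {\<eta>}. \<forall>e\<in>E. v \<in> e \<and> e \<notin> set (path_edges (g v)) \<longrightarrow> qs' e v = q e v"
    and iv': "\<forall>v\<in>V. {\<eta>, v} \<in> E \<longrightarrow> qs' {\<eta>, v} v = Qf E q {\<eta>, v} v - q {\<eta>, v} v"
    and v': "\<forall>u\<in>V - {\<eta>}. \<forall>v\<in>V - {\<eta>}. {u, v} \<in> E \<longrightarrow> detf E qs' u v = - detf E q u v"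
    using T unfolding is_eta_transform_def by auto
  have claim: "\<forall>x. length (g x) = n \<longrightarrow> x \<in> V - {\<eta>} \<longrightarrow> qs' {par x, x} x = qs {par x, x} x" for n
  proof (induction n rule: less_induct)
    case (less n)
    show ?case
    proof (intro allI impI)
      fix x assume ln: "length (g x) = n" and x: "x \<in> V - {\<eta>}"
      have xX: "x \<in> V \<union> A" and xne: "x \<noteq> \<eta>" using x by auto
      define p where "p = par x"
      define e where "e = {p, x}"
      have eE: "e \<in> E" using par_props(3)[OF xX xne] e_def p_def by simp
      show "qs' {par x, x} x = qs {par x, x} x"
      proof (cases "p = \<eta>")
        case True
        then show ?thesis using iv' qs_iv(1)[of x] eE e_def p_def x by auto
      next
        case False
        have pX: "p \<in> V \<union> A" using g_par xX xne p_def by simp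
        have pV: "p \<in> V" using par_V xX xne False p_def by simp
        have p: "p \<in> V - {\<eta>}" using pV False by simp
        have xnp: "x \<notin> set (g p)" using par_props(4)[OF xX xne] p_def by simp
        have enp: "e \<notin> set (path_edges (g p))" using pe_sub xnp e_def by blast
        have a1: "qs' e p = q e p" using iii' p eE enp e_def by auto
        have a2: "qs e p = q e p" using qs_iii[OF p eE _ enp] e_def by simp
        have a3: "Qf E qs' e x = Qf E q e x"
          unfolding Qf_def
        proof (rule prod.cong)
          fix e'' assume "e'' \<in> {e' \<in> E. x \<in> e' \<and> e' \<noteq> e}"
          then have "e'' \<notin> set (path_edges (g x))" "e'' \<in> E" "x \<in> e''"
            using on_path[OF xX xne] e_def p_def by auto
          then show "qs' e'' x = q e'' x" using iii' x by auto
        qed simp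
        have a4: "Qf E qs e x = Qf E q e x"
          unfolding Qf_def by (rule prod.cong) (auto intro!: qs_eq simp: e_def p_def)
        have lt: "length (g p) < n" using g_par(1)[OF xX xne] ln p_def by simp
        have a5: "Qf E qs' e p = Qf E qs e p"
          unfolding Qf_def
        proof (rule prod.cong)
          fix e'' assume H: "e'' \<in> {e' \<in> E. p \<in> e' \<and> e' \<noteq> e}"
          show "qs' e'' p = qs e'' p"
          proof (cases "e'' = {par p, p}")
            case True
            then show ?thesis using less.IH[OF lt] p by blast
          next
            case False
            then have "e'' \<notin> set (path_edges (g p))" using on_path[OF pX] p H by blast
            then show ?thesis using iii' qs_iii[OF p] H p by auto
          qed
        qed simp
        have d1: "detf E qs' p x = - detf E q p x" using v' p x eE e_def by auto
        have d2: "detf E qs p x = - detf E q p x" using det_core[OF x] False p_def by simp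
        have "q e p * qs' e x - Qf E qs e p * Qf E q e x = q e p * qs e x - Qf E qs e p * Qf E q e x"
          using d1 d2 a1 a2 a3 a4 a5 unfolding detf_def e_def by simp
        then have "q e p * qs' e x = q e p * qs e x" by simp
        moreover have "q e p \<ge> 1"
          using plus[OF pV False eE] par_ne_edge(1)[OF xX xne] e_def p_def False by auto
        ultimately have "qs' e x = qs e x" by simp
        then show ?thesis using e_def p_def by simp
      qed
    qed
  qed
  show ?thesis
  proof (intro ballI)
    fix e x assume eE: "e \<in> E" and xe: "x \<in> e"
    have xX: "x \<in> V \<union> A" using edge_sub eE xe by auto
    show "qs' e x = qs e x"
    proof (cases "x \<in> A")
      case True
      then have "x \<notin> V" using dt by (auto simp: decorated_tree_def)
      then have "qs e x = q e x" using qs_eq by blast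
      then show ?thesis using dt dt' True eE xe by (simp add: decorated_tree_def)
    next
      case False
      then have xV: "x \<in> V" using xX by simp
      show ?thesis
      proof (cases "x = \<eta>")
        case True
        then show ?thesis using ii' qs_eq eE xe by auto
      next
        case False
        then have x: "x \<in> V - {\<eta>}" using xV by simp
        show ?thesis
        proof (cases "e = {par x, x}")
          case True
          then show ?thesis using claim x by blast
        next
          case ne: False
          then have "e \<notin> set (path_edges (g x))" using on_path[OF xX False _ xe] by blast
          then show ?thesis using iii' qs_iii[OF x eE xe] x eE xe by auto
        qed
      qed
    qed
  qed
qed

end

theorem lemma6p5:
  fixes V A :: "'a set" and E :: "'a set set" and f :: "'a \<Rightarrow> int"
    and q :: "'a set \<Rightarrow> 'a \<Rightarrow> int" and \<eta> :: 'a
  assumes "decorated_tree V A E f q"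
    and "\<eta> \<in> Cent V A E q"
  shows "\<exists>qs. is_eta_transform V A E f q \<eta> qs
           \<and> (\<forall>qs'. is_eta_transform V A E f q \<eta> qs' \<longrightarrow> (\<forall>e\<in>E. \<forall>x\<in>e. qs' e x = qs e x))
           \<and> (\<forall>v\<in>V - {\<eta>}. Qf E q (last (path_edges (gamma (V \<union> A) E \<eta> v))) v
                 dvd q (last (path_edges (gamma (V \<union> A) E \<eta> v))) v
                     + qs (last (path_edges (gamma (V \<union> A) E \<eta> v))) v)"
proof -
  interpret dtc V A E f q \<eta> using assms by unfold_locales
  show ?thesis using exist uniq vi by blast
qed

end
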